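(* Let $p=2^m$ with $p\ge4$ and let $D$ be the $p\times p$ orthonormal discrete Haar wavelet basis matrix (defined in the context). Let $s\ge\log_2 p$, suppose Assumptions 1 and 2 hold with $0\le\delta_s<1$, and suppose $$T\le\frac{(a_u-a_\ell)^2\log p}{4(1+\delta_s)}.$$ Then $$\inf_{\hat f}\ \sup_{f^*\in\mathcal{F}_{T,s,D}}\mathbb{E}\big[\|\hat f-f^*\|_2^2\big]\ \ge\ \frac18,$$ where the infimum is over all measurable estimators $\hat f$ of $f^*$ based on $y$.
   Context: Setup: $n,p\ge1$ integers, $T>0$. For an orthonormal $D\in\mathbb{R}^{p\times p}$ with first column $d_1=p^{-1/2}(1,\dots,1)^\top$, let $\bar D$ be $D$ with its first column removed and $\mathcal{F}_{T,s,D}=\{f\in\mathbb{R}^p_{\ge0}:\ \|f\|_1=1,\ \|\bar D^\top f\|_0\le s\}$, $\|v\|_0$ being the number of nonzero entries. Given $A\in\mathbb{R}^{n\times p}$ and $f^*\in\mathcal{F}_{T,s,D}$, the observation is $y=(y_1,\dots,y_n)$ with independent $y_i\sim\mathrm{Poisson}(T(Af^* )_i)$; expectation is over $y$; $\log$ is the natural logarithm. Discrete Haar wavelet basis of $\mathbb{R}^{2^m}$: its columns are $2^{-m/2}(1,\dots,1)^\top$ (the first column) together with, for each level $\ell\in\{0,\dots,m-1\}$ and shift $k\in\{0,\dots,2^\ell-1\}$, the vector $\psi_{\ell,k}$ whose entries equal $2^{(\ell-m)/2}$ at indices $k2^{m-\ell}+1,\dots,k2^{m-\ell}+2^{m-\ell-1}$,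 equal $-2^{(\ell-m)/2}$ at indices $k2^{m-\ell}+2^{m-\ell-1}+1,\dots,(k+1)2^{m-\ell}$, and are $0$ elsewhere. Assumption 1: there are constants $a_\ell<a_u$ and $\widetilde A\in\mathbb{R}^{n\times p}$ with all entries in $[a_\ell/\sqrt n,a_u/\sqrt n]$ such that $A=\big(\widetilde A+\frac{a_u-2a_\ell}{\sqrt n}\mathbb{1}_{n\times p}\big)/\big(2(a_u-a_\ell)\sqrt n\big)$, with $\mathbb{1}_{n\times p}$ the all-ones matrix. Assumption 2: there is $\delta_s\ge0$ such that $\|\widetilde A D u\|_2^2\le(1+\delta_s)\|u\|_2^2$ for all $u\in\mathbb{R}^p$ with $\|u\|_0\le 2s$. *)

theory Defs
  imports "HOL-Analysis.Analysis" "HOL-Probability.Probability"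
begin

text \<open>Conventions: vectors in R^k are functions nat => real, only indices 0..k-1 matter;
  matrices are nat => nat => real (row index first). Indices are 0-based.\<close>

text \<open>Discrete Haar wavelet basis matrix of R^(2^m); column 0 is the constant vector,
  column 2^l + k (0 <= l < m, 0 <= k < 2^l) is psi_{l,k}. Entry (i, j).\<close>
definition haar :: "nat \<Rightarrow> nat \<Rightarrow> nat \<Rightarrow> real" where
  "haar m i j =
     (if j = 0 then 2 powr (- real m / 2)
      else (let l = nat \<lfloor>log 2 (real j)\<rfloor>; k = j - 2 ^ l; w = 2 ^ (m - l); h = 2 ^ (m - l - 1) in
            if k * w \<le> i \<and> i < k * w + h then 2 powr ((real l - real m) / 2)
            else if k * w + h \<le> i \<and> i < (k + 1) * w then - (2 powr ((real l - real m) / 2))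
            else 0))"

definition mat_vec :: "nat \<Rightarrow> (nat \<Rightarrow> nat \<Rightarrow> real) \<Rightarrow> (nat \<Rightarrow> real) \<Rightarrow> nat \<Rightarrow> real" where
  "mat_vec p M v = (\<lambda>i. \<Sum>j<p. M i j * v j)"

definition sqnorm :: "nat \<Rightarrow> (nat \<Rightarrow> real) \<Rightarrow> real" where
  "sqnorm p v = (\<Sum>i<p. (v i)\<^sup>2)"

definition l0 :: "nat \<Rightarrow> (nat \<Rightarrow> real) \<Rightarrow> nat" where
  "l0 p v = card {i. i < p \<and> v i \<noteq> 0}"

definition fclass :: "nat \<Rightarrow> nat \<Rightarrow> (nat \<Rightarrow> nat \<Rightarrow> real) \<Rightarrow> (nat \<Rightarrow> real) set" where
  "fclass p s D = {f. (\<forall>j<p. 0 \<le> f j) \<and> (\<Sum>j<p. \<bar>f j\<bar>) = 1 \<and>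
       card {j. 1 \<le> j \<and> j < p \<and> (\<Sum>i<p. D i j * f i) \<noteq> 0} \<le> s}"

definition obs_pmf :: "nat \<Rightarrow> nat \<Rightarrow> real \<Rightarrow> (nat \<Rightarrow> nat \<Rightarrow> real) \<Rightarrow> (nat \<Rightarrow> real) \<Rightarrow> (nat \<Rightarrow> nat) pmf" where
  "obs_pmf n p T A f = Pi_pmf {..<n} 0 (\<lambda>i. poisson_pmf (T * mat_vec p A f i))"

definition risk :: "nat \<Rightarrow> nat \<Rightarrow> real \<Rightarrow> (nat \<Rightarrow> nat \<Rightarrow> real) \<Rightarrow> ((nat \<Rightarrow> nat) \<Rightarrow> nat \<Rightarrow> real)
     \<Rightarrow> (nat \<Rightarrow> real) \<Rightarrow> ennreal" where
  "risk n p T A fhat f =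
     (\<integral>\<^sup>+ y. ennreal (sqnorm p (\<lambda>j. fhat y j - f j)) \<partial>measure_pmf (obs_pmf n p T A f))"

end

theory Submission
  imports Defs
begin


lemma div_iff_bounds: "0 < (h::nat) \<Longrightarrow> i div h = a \<longleftrightarrow> a*h \<le> i \<and> i < (a+1)*h"
  by (metis Groups.mult_ac(2) div_nat_eqI div_times_less_eq_dividend
    dividend_less_div_times semiring_norm(174) times_nat.simps(2))

lemma floor_log_pow: "k < 2^l \<Longrightarrow> nat \<lfloor>log 2 (real (2^l + k))\<rfloor> = l"
proof -
  assume "k < 2^l"
  then have "\<lfloor>log (real 2) (real (2^l + k))\<rfloor> = int l"
    by (intro floor_log_nat_eq_if) auto
  then show ?thesis by simp
qed

definition sg :: "nat \<Rightarrow> real" where "sg q = (if even q then 1 else -1)"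

lemma haar_lvl:
  assumes "l < m" "k < 2^l"
  shows "haar m i (2^l + k) = (if i div 2^(m-l) = k then 2 powr ((real l - real m)/2) * sg (i div 2^(m-l-1)) else 0)"
proof -
  define h :: nat where "h = 2^(m-l-1)"
  have w: "(2::nat)^(m-l) = 2*h" unfolding h_def using assms(1)
    by (metis Suc_diff_Suc diff_Suc_1 power_Suc)
  have hpos: "0 < h" by (simp add: h_def)
  define q where "q = i div h"
  have qw: "i div 2^(m-l) = q div 2" unfolding w q_def by (simp add: div_mult2_eq mult.commute)
  have j0: "2^l + k \<noteq> 0" by simp
  have c1: "(k * (2*h) \<le> i \<and> i < k * (2*h) + h) \<longleftrightarrow> q = 2*k"
    unfolding q_def using div_iff_bounds[OF hpos, of i "2*k"] by (auto simp: algebra_simps)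
  have c2: "(k * (2*h) + h \<le> i \<and> i < (k+1) * (2*h)) \<longleftrightarrow> q = 2*k+1"
    unfolding q_def using div_iff_bounds[OF hpos, of i "2*k+1"] by (auto simp: algebra_simps)
  have hh: "(2::nat)^(m-l-1) = h" by (simp add: h_def)
  define c where "c = 2 powr ((real l - real m)/2)"
  have L: "haar m i (2^l+k) = (if k*(2*h) \<le> i \<and> i < k*(2*h)+h then c else if k*(2*h)+h \<le> i \<and> i < (k+1)*(2*h) then -c else 0)"
    unfolding haar_def Let_def floor_log_pow[OF assms(2)] c_def using j0 by (simp only: if_False w hh add_diff_cancel_left')
  show ?thesis
    unfolding L c1 c2 qw c_def[symmetric] hh q_def[symmetric]
    by (auto simp: sg_def)
qed

lemma sum_lessThan_add: "(\<Sum>j<(a::nat)+b. g j) = (\<Sum>j<a. g j) + (\<Sum>k<b. g (a+k))"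
  by (induction b) (auto simp: algebra_simps)

lemma sum_pow2_split: "(\<Sum>j<(2::nat)^m. g j) = g 0 + (\<Sum>l<m. \<Sum>k<2^l. g (2^l + k))"
proof (induction m)
  case 0
  have "{..<(1::nat)} = {0}" by auto
  then show ?case by simp
next
  case (Suc m)
  have "(\<Sum>j<2^Suc m. g j) = (\<Sum>j<2^m + 2^m. g j)" by (simp add: mult_2)
  also have "\<dots> = (\<Sum>j<2^m. g j) + (\<Sum>k<2^m. g (2^m + k))" by (rule sum_lessThan_add)
  finally show ?case using Suc by (simp add: add.assoc)
qed

lemma sg_sq: "sg q * sg q = 1" by (simp add: sg_def)

lemma powr_half_sq: "2 powr ((real l - real m)/2) * 2 powr ((real l - real m)/2) = 2^l / 2^m"
proof -
  have "2 powr ((real l - real m)/2) * 2 powr ((real l - real m)/2) = 2 powr (real l - real m)"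
    by (simp flip: powr_add)
  also have "\<dots> = 2^l / 2^m" by (simp add: powr_diff powr_realpow)
  finally show ?thesis .
qed

lemma level_sum:
  assumes "l < m" "i < 2^m"
  shows "(\<Sum>k<2^l. haar m i (2^l+k) * haar m i' (2^l+k)) =
     (if i div 2^(m-l) = i' div 2^(m-l) then 2^l/2^m * (sg (i div 2^(m-l-1)) * sg (i' div 2^(m-l-1))) else 0)"
proof -
  have lt: "i div 2^(m-l) < 2^l"
  proof -
    have "(2::nat)^m = 2^l * 2^(m-l)" using assms(1) by (simp flip: power_add)
    then show ?thesis using assms(2) by (simp add: less_mult_imp_div_less)
  qed
  have "(\<Sum>k<2^l. haar m i (2^l+k) * haar m i' (2^l+k)) =
        (\<Sum>k<2^l. if i div 2^(m-l) = k then (if i' div 2^(m-l) = k then (2 powr ((real l - real m)/2) * 2 powr ((real l - real m)/2)) * (sg (i div 2^(m-l-1)) * sg (i' div 2^(m-l-1))) else 0) else 0)"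
    by (intro sum.cong refl) (auto simp: haar_lvl[OF assms(1)] mult_ac)
  also have "\<dots> = (if i' div 2^(m-l) = i div 2^(m-l) then (2 powr ((real l - real m)/2) * 2 powr ((real l - real m)/2)) * (sg (i div 2^(m-l-1)) * sg (i' div 2^(m-l-1))) else 0)"
    using lt by (simp add: sum.delta)
  finally show ?thesis by (simp add: powr_half_sq eq_commute)
qed

definition Zf :: "nat \<Rightarrow> nat \<Rightarrow> nat \<Rightarrow> real" where
  "Zf m i i' = (\<Sum>l<m. if i div 2^(m-l) = i' div 2^(m-l) then 2^l * (sg (i div 2^(m-l-1)) * sg (i' div 2^(m-l-1))) else 0)"

lemma Zf_val: "i div 2^m = i' div 2^m \<Longrightarrow> Zf m i i' = (if i = i' then 2^m - 1 else -1)"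
proof (induction m arbitrary: i i')
  case 0
  then show ?case by (simp add: Zf_def)
next
  case (Suc m)
  have e1: "i div 2^(Suc m - l) = (i div 2) div 2^(m-l)" if "l < m" for i l :: nat
    using that by (simp add: Suc_diff_le div_mult2_eq)
  have e2: "i div 2^(Suc m - l - 1) = (i div 2) div 2^(m-l-1)" if "l < m" for i l :: nat
  proof -
    have "(2::nat)^(m-l) = 2 * 2^(m-l-1)" using that
      by (metis Suc_diff_Suc diff_Suc_1 power_Suc)
    moreover have "Suc m - l - 1 = m - l" using that by simp
    ultimately show ?thesis by (simp add: div_mult2_eq)
  qed
  have tm: "(if i div 2^(Suc m-l) = i' div 2^(Suc m-l) then 2^l * (sg (i div 2^(Suc m-l-1)) * sg (i' div 2^(Suc m-l-1))) else (0::real))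
     = (if (i div 2) div 2^(m-l) = (i' div 2) div 2^(m-l) then 2^l * (sg ((i div 2) div 2^(m-l-1)) * sg ((i' div 2) div 2^(m-l-1))) else 0)"
    if "l < m" for l
    by (simp only: e1[OF that] e2[OF that])
  have lastt: "(if i div 2^(Suc m-m) = i' div 2^(Suc m-m) then 2^m * (sg (i div 2^(Suc m-m-1)) * sg (i' div 2^(Suc m-m-1))) else (0::real))
     = (if i div 2 = i' div 2 then 2^m * (sg i * sg i') else 0)" by simp
  have Zs: "Zf (Suc m) i i' = Zf m (i div 2) (i' div 2) +
        (if i div 2 = i' div 2 then 2^m * (sg i * sg i') else 0)"
    unfolding Zf_def sum.lessThan_Suc lastt
    by (intro arg_cong2[where f="(+)"] sum.cong refl) (simp only: lessThan_iff tm)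
  have IH: "Zf m (i div 2) (i' div 2) = (if i div 2 = i' div 2 then 2^m - 1 else -1)"
    by (rule Suc.IH) (use Suc.prems in \<open>simp add: div_mult2_eq\<close>)
  show ?case
  proof (cases "i div 2 = i' div 2")
    case T: True
    show ?thesis
    proof (cases "i = i'")
      case True
      then show ?thesis unfolding Zs IH using T by (simp add: sg_sq)
    next
      case False
      have "sg i * sg i' = -1"
        using T False unfolding sg_def by (auto, presburger+)
      then show ?thesis unfolding Zs IH using T False by simp
    qed
  next
    case False
    then have "i \<noteq> i'" by auto
    then show ?thesis unfolding Zs IH using False by simp
  qed
qed

lemma haar0_sq: "haar m i 0 * haar m i' 0 = 1 / 2^m"
proof -
  have "haar m i 0 * haar m i' 0 = 2 powr ((real 0 - real m)/2) * 2 powr ((real 0 - real m)/2)"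
    by (simp add: haar_def)
  also have "\<dots> = 1/2^m" by (simp only: powr_half_sq) simp
  finally show ?thesis .
qed

lemma haar_orth:
  assumes "i < 2^m" "i' < 2^m"
  shows "(\<Sum>j<2^m. haar m i j * haar m i' j) = (if i = i' then 1 else 0)"
proof -
  have "(\<Sum>j<2^m. haar m i j * haar m i' j) = 1/2^m + (\<Sum>l<m. \<Sum>k<2^l. haar m i (2^l+k) * haar m i' (2^l+k))"
    by (subst sum_pow2_split) (simp add: haar0_sq)
  also have "(\<Sum>l<m. \<Sum>k<2^l. haar m i (2^l+k) * haar m i' (2^l+k)) =
     (\<Sum>l<m. (if i div 2^(m-l) = i' div 2^(m-l) then 2^l * (sg (i div 2^(m-l-1)) * sg (i' div 2^(m-l-1))) else 0) / 2^m)"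
    by (intro sum.cong refl) (simp add: level_sum assms)
  also have "\<dots> = Zf m i i' / 2^m" unfolding Zf_def by (simp add: sum_divide_distrib)
  also have "Zf m i i' = (if i = i' then 2^m - 1 else -1)"
    by (rule Zf_val) (use assms in simp)
  finally show ?thesis by (cases "i = i'") (simp_all add: field_simps)
qed

lemma decomp_pow2: "1 \<le> j \<Longrightarrow> j < 2^m \<Longrightarrow> \<exists>l<m. \<exists>r<2^l. j = 2^l + (r::nat)"
proof (induction m)
  case 0
  then show ?case by simp
next
  case (Suc m)
  show ?case
  proof (cases "j < 2^m")
    case True
    then show ?thesis using Suc by (meson less_SucI)
  next
    case False
    then show ?thesis using Suc.prems by (intro exI[of _ m]) (auto intro: exI[of _ "j - 2^m"])
  qed
qed

lemma haar_card:
  assumes "k < 2^m"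
  shows "card {j. 1 \<le> j \<and> j < 2^m \<and> haar m k j \<noteq> 0} \<le> m"
proof -
  have "{j. 1 \<le> j \<and> j < 2^m \<and> haar m k j \<noteq> 0} \<subseteq> (\<lambda>l. 2^l + k div 2^(m-l)) ` {..<m}"
  proof
    fix j assume "j \<in> {j. 1 \<le> j \<and> j < 2^m \<and> haar m k j \<noteq> 0}"
    then have j: "1 \<le> j" "j < 2^m" "haar m k j \<noteq> 0" by auto
    obtain l r where lr: "l < m" "r < 2^l" "j = 2^l + r" using decomp_pow2[OF j(1,2)] by blast
    have "k div 2^(m-l) = r" using j(3) unfolding lr(3) haar_lvl[OF lr(1,2)] by (auto split: if_splits)
    then show "j \<in> (\<lambda>l. 2^l + k div 2^(m-l)) ` {..<m}" using lr by auto
  qed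
  then have "card {j. 1 \<le> j \<and> j < 2^m \<and> haar m k j \<noteq> 0} \<le> card ((\<lambda>l. 2^l + k div 2^(m-l)) ` {..<m})"
    by (intro card_mono) auto
  also have "\<dots> \<le> m" using card_image_le[of "{..<m}"] by simp
  finally show ?thesis .
qed



lemma exp_sums_real: "(\<lambda>n. (c::real)^n / fact n) sums exp c"
  using exp_converges[of c] by (simp add: divide_inverse mult.commute)

lemma nn_exp_series:
  assumes "0 \<le> c"
  shows "(\<integral>\<^sup>+ (x::nat). ennreal (c^x / fact x) \<partial>count_space UNIV) = ennreal (exp c)"
proof -
  have s: "summable (\<lambda>x::nat. c ^ x / fact x)" using exp_sums_real by (rule sums_summable)
  have "(\<integral>\<^sup>+ (x::nat). ennreal (c^x / fact x) \<partial>count_space UNIV) = ennreal (\<Sum>x. c^x / fact x)"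
    using assms by (simp add: nn_integral_count_space_nat suminf_ennreal s ennreal_suminf_neq_top)
  also have "(\<Sum>x. c^x / fact x) = exp c" using exp_sums_real by (rule sums_unique[symmetric])
  finally show ?thesis .
qed

lemma poisson_chi:
  assumes a: "0 < a" and b: "0 < b"
  shows "(\<integral>\<^sup>+ t. ennreal (pmf (poisson_pmf a) t / pmf (poisson_pmf b) t) \<partial>measure_pmf (poisson_pmf a))
         = ennreal (exp ((a-b)^2/b))"
proof -
  have pt: "ennreal (pmf (poisson_pmf a) t) * ennreal (pmf (poisson_pmf a) t / pmf (poisson_pmf b) t)
      = ennreal ((a^2/b)^t / fact t) * ennreal (exp (b - 2*a))" for t
  proof -
    have "pmf (poisson_pmf a) t * (pmf (poisson_pmf a) t / pmf (poisson_pmf b) t)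
        = (a^2/b)^t / fact t * exp (b - 2*a)"
    proof -
      have e: "exp (b - 2*a) = exp (-a) * exp (-a) / exp (-b)"
        by (simp only: exp_diff[symmetric] exp_add[symmetric]) simp
      have p: "(a^2/b)^t = a^t * a^t / b^t"
        by (simp add: power_divide power2_eq_square power_mult_distrib)
      have f: "fact t > (0::real)" by simp
      show ?thesis unfolding e p pmf_poisson[OF a] pmf_poisson[OF b]
        using a b f by (simp add: field_simps)
    qed
    then show ?thesis using a b
      by (simp add: ennreal_mult''[symmetric] del: pmf_poisson)
  qed
  have "(\<integral>\<^sup>+ t. ennreal (pmf (poisson_pmf a) t / pmf (poisson_pmf b) t) \<partial>measure_pmf (poisson_pmf a))
      = (\<integral>\<^sup>+ t. ennreal ((a^2/b)^t / fact t) * ennreal (exp (b - 2*a)) \<partial>count_space UNIV)"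
    unfolding nn_integral_measure_pmf pt ..
  also have "\<dots> = ennreal (exp (a^2/b)) * ennreal (exp (b - 2*a))"
    using a b by (simp add: nn_integral_multc nn_exp_series)
  also have "\<dots> = ennreal (exp ((a-b)^2/b))"
  proof -
    have "exp (a^2/b) * exp (b - 2*a) = exp ((a-b)^2/b)"
      using b by (simp add: exp_add[symmetric] power2_eq_square field_simps)
    then show ?thesis by (simp add: ennreal_mult''[symmetric])
  qed
  finally show ?thesis .
qed

lemma amgm_ratio:
  fixes P Q c :: real assumes "0 < Q" "0 < c"
  shows "P \<le> c/2 * Q + 1/(2*c) * (P * (P/Q))"
proof -
  have "c/2 * Q + 1/(2*c) * (P * (P/Q)) - P = (c*Q - P)^2 / (2*c*Q)"
    using assms by (simp add: field_simps power2_eq_square)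
  moreover have "0 \<le> (c*Q - P)^2 / (2*c*Q)" using assms by simp
  ultimately show ?thesis by linarith
qed

lemma prod_poisson_bound:
  fixes I :: "nat set" and a b :: "nat \<Rightarrow> real" and S :: "(nat \<Rightarrow> nat) set" and c :: real
  assumes I: "finite I" and a: "\<forall>i\<in>I. 0 < a i" and b: "\<forall>i\<in>I. 0 < b i" and c: "0 < c"
  shows "measure (Pi_pmf I 0 (\<lambda>i. poisson_pmf (a i))) S
     \<le> c/2 * measure (Pi_pmf I 0 (\<lambda>i. poisson_pmf (b i))) S + exp (\<Sum>i\<in>I. (a i - b i)^2 / b i) / (2*c)"
proof -
  define P where "P = Pi_pmf I 0 (\<lambda>i. poisson_pmf (a i))"
  define Q where "Q = Pi_pmf I 0 (\<lambda>i. poisson_pmf (b i))"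
  define r where "r y = (\<Prod>i\<in>I. pmf (poisson_pmf (a i)) (y i) / pmf (poisson_pmf (b i)) (y i))" for y :: "nat \<Rightarrow> nat"
  define X where "X = (\<Sum>i\<in>I. (a i - b i)^2 / b i)"
  have r_nn: "0 \<le> r y" for y unfolding r_def by (intro prod_nonneg) auto
  have R: "(\<integral>\<^sup>+ y. ennreal (r y) \<partial>measure_pmf P) = ennreal (exp X)"
  proof -
    have "(\<integral>\<^sup>+ y. ennreal (r y) \<partial>measure_pmf P) =
          (\<integral>\<^sup>+ y. (\<Prod>i\<in>I. ennreal (pmf (poisson_pmf (a i)) (y i) / pmf (poisson_pmf (b i)) (y i))) \<partial>measure_pmf P)"
      unfolding r_def by (intro nn_integral_cong prod_ennreal[symmetric]) auto
    also have "\<dots> = (\<Prod>i\<in>I. \<integral>\<^sup>+ t. ennreal (pmf (poisson_pmf (a i)) t / pmf (poisson_pmf (b i)) t) \<partial>measure_pmf (poisson_pmf (a i)))"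
      unfolding P_def by (rule nn_integral_prod_Pi_pmf[OF I])
    also have "\<dots> = (\<Prod>i\<in>I. ennreal (exp ((a i - b i)^2 / b i)))"
      using a b by (intro prod.cong refl poisson_chi) auto
    also have "\<dots> = ennreal (exp X)"
      unfolding X_def exp_sum[OF I] by (rule prod_ennreal) auto
    finally show ?thesis .
  qed
  have pw: "ennreal (pmf P y) * indicator S y \<le>
      ennreal (c/2) * (ennreal (pmf Q y) * indicator S y) + ennreal (1/(2*c)) * (ennreal (pmf P y) * ennreal (r y))" for y
  proof (cases "y \<in> S")
    case False
    then show ?thesis by simp
  next
    case True
    have real: "pmf P y \<le> c/2 * pmf Q y + 1/(2*c) * (pmf P y * r y)"
    proof (cases "\<forall>x. x \<notin> I \<longrightarrow> y x = 0")
      case supp: True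
      have Py: "pmf P y = (\<Prod>i\<in>I. pmf (poisson_pmf (a i)) (y i))" unfolding P_def pmf_Pi[OF I] using supp by simp
      have Qy: "pmf Q y = (\<Prod>i\<in>I. pmf (poisson_pmf (b i)) (y i))" unfolding Q_def pmf_Pi[OF I] using supp by simp
      have Qpos: "0 < pmf Q y" unfolding Qy using b by (intro prod_pos) (auto simp: exp_gt_zero)
      have ry: "r y = pmf P y / pmf Q y" unfolding r_def Py Qy by (rule prod_dividef)
      show ?thesis unfolding ry using amgm_ratio[OF Qpos c] .
    next
      case False
      then have "pmf P y = 0" unfolding P_def pmf_Pi[OF I] by auto
      then show ?thesis using c by (simp add: pmf_nonneg)
    qed
    have "ennreal (pmf P y) \<le> ennreal (c/2 * pmf Q y + 1/(2*c) * (pmf P y * r y))"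
      using real by (rule ennreal_leI)
    also have "\<dots> = ennreal (c/2) * ennreal (pmf Q y) + ennreal (1/(2*c)) * (ennreal (pmf P y) * ennreal (r y))"
      using c r_nn[of y] by (simp add: ennreal_plus ennreal_mult[symmetric] pmf_nonneg del: ennreal_plus_if)
    finally show ?thesis using True by simp
  qed
  have "emeasure (measure_pmf P) S = (\<integral>\<^sup>+ y. indicator S y \<partial>measure_pmf P)" by simp
  also have "\<dots> = (\<integral>\<^sup>+ y. ennreal (pmf P y) * indicator S y \<partial>count_space UNIV)"
    by (rule nn_integral_measure_pmf)
  also have "\<dots> \<le> (\<integral>\<^sup>+ y. ennreal (c/2) * (ennreal (pmf Q y) * indicator S y) + ennreal (1/(2*c)) * (ennreal (pmf P y) * ennreal (r y)) \<partial>count_space UNIV)"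
    by (intro nn_integral_mono pw)
  also have "\<dots> = ennreal (c/2) * (\<integral>\<^sup>+ y. ennreal (pmf Q y) * indicator S y \<partial>count_space UNIV)
        + ennreal (1/(2*c)) * (\<integral>\<^sup>+ y. ennreal (pmf P y) * ennreal (r y) \<partial>count_space UNIV)"
    by (simp add: nn_integral_add nn_integral_cmult)
  also have "(\<integral>\<^sup>+ y. ennreal (pmf Q y) * indicator S y \<partial>count_space UNIV) = emeasure (measure_pmf Q) S"
    by (simp flip: nn_integral_measure_pmf)
  also have "(\<integral>\<^sup>+ y. ennreal (pmf P y) * ennreal (r y) \<partial>count_space UNIV) = ennreal (exp X)"
    by (simp flip: nn_integral_measure_pmf R)
  finally have "ennreal (measure P S) \<le> ennreal (c/2) * ennreal (measure Q S) + ennreal (1/(2*c)) * ennreal (exp X)"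
    by (simp add: measure_pmf.emeasure_eq_measure)
  also have "\<dots> = ennreal (c/2 * measure Q S + exp X / (2*c))"
    using c by (simp add: ennreal_plus ennreal_mult[symmetric] divide_nonneg_pos del: ennreal_plus_if)
  finally have "measure P S \<le> c/2 * measure Q S + exp X / (2*c)"
    using c by (subst (asm) ennreal_le_iff) auto
  then show ?thesis unfolding P_def Q_def X_def .
qed



lemma sep_lemma:
  fixes v :: "nat \<Rightarrow> real"
  assumes "k < p" "k' < p" "k \<noteq> k'"
  shows "1 \<le> sqnorm p (\<lambda>j. v j - (if j = k then 1 else 0)) + sqnorm p (\<lambda>j. v j - (if j = k' then 1 else 0))"
proof -
  have pt: "((if j = k then 1 else 0) - (if j = k' then 1 else 0))^2
      \<le> 2 * (v j - (if j = k then 1 else 0))^2 + 2 * (v j - (if j = k' then 1 else 0))^2" for j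
  proof -
    have "\<forall>x a b :: real. (a - b)^2 \<le> 2*(x-a)^2 + 2*(x-b)^2"
    proof (intro allI)
      fix x a b :: real
      have "2*(x-a)^2 + 2*(x-b)^2 - (a - b)^2 = (2*x - a - b)^2" by (simp add: power2_eq_square algebra_simps)
      moreover have "0 \<le> (2*x - a - b)^2" by simp
      ultimately show "(a - b)^2 \<le> 2*(x-a)^2 + 2*(x-b)^2" by linarith
    qed
    then show ?thesis by blast
  qed
  have e: "((if j = k then 1 else 0) - (if j = k' then 1 else 0))^2 = (if j = k then 1 else 0) + (if j = k' then (1::real) else 0)" for j
    using assms(3) by auto
  have "2 = (\<Sum>j<p. ((if j = k then 1 else 0) - (if j = k' then 1 else 0))^2 :: real)"
    unfolding e sum.distrib using assms by simp
  also have "\<dots> \<le> (\<Sum>j<p. 2 * (v j - (if j = k then 1 else 0))^2 + 2 * (v j - (if j = k' then 1 else 0))^2)"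
    by (rule sum_mono) (rule pt)
  also have "\<dots> = 2 * (sqnorm p (\<lambda>j. v j - (if j = k then 1 else 0)) + sqnorm p (\<lambda>j. v j - (if j = k' then 1 else 0)))"
    unfolding sqnorm_def by (simp add: sum.distrib sum_distrib_left algebra_simps)
  finally show ?thesis by simp
qed

lemma ennreal_eighth: "(1/8 :: ennreal) = ennreal (1/8)"
  by (simp add: divide_ennreal[symmetric])

theorem lemma2:
  fixes m n s :: nat and T a_l a_u \<delta> :: real
    and A At :: "nat \<Rightarrow> nat \<Rightarrow> real"
  defines "p \<equiv> 2 ^ m"
  defines "D \<equiv> haar m"
  assumes n_pos: "n \<ge> 1"
    and p_ge: "p \<ge> 4"
    and T_pos: "T > 0"
    and s_ge: "real s \<ge> log 2 (real p)"
    and a_lt: "a_l < a_u"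
    and At_bounds: "\<forall>i<n. \<forall>j<p. a_l / sqrt n \<le> At i j \<and> At i j \<le> a_u / sqrt n"
    and A_def: "\<forall>i<n. \<forall>j<p. A i j = (At i j + (a_u - 2 * a_l) / sqrt n) / (2 * (a_u - a_l) * sqrt n)"
    and delta: "0 \<le> \<delta>" "\<delta> < 1"
    and RIP: "\<forall>u. l0 p u \<le> 2 * s \<longrightarrow>
                 sqnorm n (mat_vec p At (mat_vec p D u)) \<le> (1 + \<delta>) * sqnorm p u"
    and T_le: "T \<le> (a_u - a_l)\<^sup>2 * ln (real p) / (4 * (1 + \<delta>))"
  shows "(INF fhat. SUP f \<in> fclass p s D. risk n p T A fhat f) \<ge> 1 / 8"
proof -
  have p: "p = 2^m" by (simp add: p_def)
  have D: "D = haar m" by (simp add: D_def)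
  have ppos: "0 < p" using p_ge by simp
  have m2: "2 \<le> m"
  proof (rule ccontr)
    assume "\<not> 2 \<le> m"
    then have "m \<le> 1" by simp
    then have "(2::nat)^m \<le> 2^1" by (intro power_increasing) auto
    then show False using p_ge p by simp
  qed
  have logp: "log 2 (real p) = real m" unfolding p by (simp add: log_nat_power)
  have ms: "m \<le> s" using s_ge logp by simp
  define d where "d = a_u - a_l"
  have dpos: "0 < d" using a_lt d_def by simp
  define rn where "rn = sqrt (real n)"
  have rnpos: "0 < rn" using n_pos rn_def by simp
  have rn2: "rn * rn = real n" using n_pos rn_def by simp
  have A_lb: "1/(2*real n) \<le> A i j" if "i < n" "j < p" for i j
  proof -
    have "a_l / rn \<le> At i j" using At_bounds that rn_def by auto
    then have "d / rn \<le> At i j + (a_u - 2*a_l)/rn"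
      unfolding d_def by (simp add: diff_divide_distrib add_divide_distrib field_simps)
    then have "(d/rn) / (2*d*rn) \<le> (At i j + (a_u - 2*a_l)/rn) / (2*d*rn)"
      using dpos rnpos by (intro divide_right_mono) auto
    also have "\<dots> = A i j" using A_def that d_def rn_def by simp
    finally have "(d/rn) / (2*d*rn) \<le> A i j" .
    moreover have "(d/rn) / (2*d*rn) = 1/(2*(rn*rn))" using dpos rnpos by (simp add: field_simps)
    ultimately show ?thesis unfolding rn2 by simp
  qed
  define e where "e k = (\<lambda>j. if j = k then 1 else (0::real))" for k :: nat
  define f0 where "f0 = (\<lambda>j::nat. 1 / real p)"
  define lam where "lam k i = T * mat_vec p A (e k) i" for k i
  define mu where "mu i = T * mat_vec p A f0 i" for i
  have lam_eq: "lam k i = T * A i k" if "k < p" for k i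
    unfolding lam_def mat_vec_def e_def using that by (simp add: if_distrib cong: if_cong)
  have lam_pos: "0 < lam k i" if "k < p" "i < n" for k i
  proof -
    have "0 < 1/(2*real n)" using n_pos by simp
    then have "0 < A i k" using A_lb[OF that(2,1)] by linarith
    then show ?thesis using lam_eq[OF that(1)] T_pos by simp
  qed
  have mu_ge: "T/(2*real n) \<le> mu i" if "i < n" for i
  proof -
    have "(\<Sum>j<p. 1/(2*real n) * (1/real p)) \<le> (\<Sum>j<p. A i j * f0 j)"
      unfolding f0_def using A_lb[OF that] by (intro sum_mono mult_right_mono) auto
    moreover have "(\<Sum>j<p. 1/(2*real n) * (1/real p)) = 1/(2*real n)" using ppos by simp
    ultimately have "1/(2*real n) \<le> mat_vec p A f0 i" unfolding mat_vec_def by simp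
    then show ?thesis unfolding mu_def using T_pos by (simp add: mult_left_mono divide_le_eq)
  qed
  have mu_pos: "0 < mu i" if "i < n" for i
    using mu_ge[OF that] T_pos n_pos by (smt (verit) divide_pos_pos of_nat_0_less_iff less_le_trans mult_pos_pos zero_less_numeral le_less_trans linorder_not_le not_one_le_zero)
  have e_in: "e k \<in> fclass p s D" if "k < p" for k
  proof -
    have c: "(\<Sum>i<p. D i j * e k i) = haar m k j" for j
      unfolding D e_def using that by (simp add: if_distrib cong: if_cong)
    have "card {j. 1 \<le> j \<and> j < p \<and> (\<Sum>i<p. D i j * e k i) \<noteq> 0} = card {j. 1 \<le> j \<and> j < 2^m \<and> haar m k j \<noteq> 0}"
      unfolding c by (simp add: p)
    also have "\<dots> \<le> m" using haar_card that p by simp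
    finally have "card {j. 1 \<le> j \<and> j < p \<and> (\<Sum>i<p. D i j * e k i) \<noteq> 0} \<le> s" using ms by simp
    moreover have "(\<Sum>j<p. \<bar>e k j\<bar>) = 1" unfolding e_def using that by (simp add: if_distrib cong: if_cong)
    moreover have "\<forall>j<p. 0 \<le> e k j" unfolding e_def by simp
    ultimately show ?thesis unfolding fclass_def by blast
  qed
  have chi: "(\<Sum>i<n. (lam k i - mu i)^2 / mu i) \<le> ln (real p) / 8" if "k < p" for k
  proof -
    define u where "u j = (if j = 0 then 0 else haar m k j)" for j
    define w where "w j = e k j - f0 j" for j
    have Du: "mat_vec p D u i = w i" if "i < p" for i
    proof -
      have fe: "(\<lambda>j. haar m i j * u j) = (\<lambda>j. haar m i j * haar m k j - (if j = 0 then haar m i 0 * haar m k 0 else 0))"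
        unfolding u_def by (rule ext) auto
      have "mat_vec p D u i = (\<Sum>j<p. haar m i j * haar m k j) - haar m i 0 * haar m k 0"
        unfolding mat_vec_def D fe sum_subtractf using ppos by simp
      also have "\<dots> = (if i = k then 1 else 0) - 1/2^m"
        using haar_orth[of i m k] haar0_sq[of m i k] that \<open>k < p\<close> p by simp
      also have "\<dots> = w i" unfolding w_def e_def f0_def p by simp
      finally show ?thesis .
    qed
    have sum_w: "(\<Sum>j<p. w j) = 0"
      unfolding w_def e_def f0_def sum_subtractf using \<open>k < p\<close> ppos by simp
    define v where "v = mat_vec p At w"
    have l0u: "l0 p u \<le> 2 * s"
    proof -
      have "{i. i < p \<and> u i \<noteq> 0} = {j. 1 \<le> j \<and> j < 2^m \<and> haar m k j \<noteq> 0}"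
        unfolding u_def p by auto
      then have "l0 p u \<le> m" unfolding l0_def using haar_card \<open>k < p\<close> p by simp
      then show ?thesis using ms by simp
    qed
    have squ: "sqnorm p u \<le> 1"
    proof -
      have "sqnorm p u \<le> (\<Sum>j<p. haar m k j * haar m k j)"
        unfolding sqnorm_def u_def by (intro sum_mono) (auto simp: power2_eq_square)
      also have "\<dots> = 1" using haar_orth[of k m k] \<open>k < p\<close> p by simp
      finally show ?thesis .
    qed
    have mv: "mat_vec p At (mat_vec p D u) = v"
      unfolding v_def by (rule ext) (simp add: mat_vec_def[of p At] Du)
    have rip: "sqnorm n v \<le> 1 + \<delta>"
    proof -
      have "sqnorm n v \<le> (1 + \<delta>) * sqnorm p u" using RIP l0u mv by auto
      also have "\<dots> \<le> (1 + \<delta>) * 1" using squ delta by (intro mult_left_mono) auto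
      finally show ?thesis by simp
    qed
    have diff: "lam k i - mu i = T * v i / (2*d*rn)" if "i < n" for i
    proof -
      have "lam k i - mu i = T * (\<Sum>j<p. A i j * w j)"
        unfolding lam_def mu_def mat_vec_def w_def
        by (simp add: sum_subtractf right_diff_distrib)
      also have "(\<Sum>j<p. A i j * w j) = (\<Sum>j<p. (At i j * w j + (a_u - 2*a_l)/rn * w j) / (2*d*rn))"
        using A_def that by (intro sum.cong refl) (simp add: d_def rn_def add_divide_distrib ring_distribs)
      also have "\<dots> = (v i + (a_u - 2*a_l)/rn * (\<Sum>j<p. w j)) / (2*d*rn)"
        unfolding v_def mat_vec_def by (simp add: sum_divide_distrib[symmetric] sum.distrib sum_distrib_left)
      also have "\<dots> = v i / (2*d*rn)" using sum_w by simp
      finally show ?thesis by simp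
    qed
    have trm: "(lam k i - mu i)^2 / mu i \<le> T/(2*d^2) * (v i)^2" if "i < n" for i
    proof -
      have num: "(lam k i - mu i)^2 = T^2 * (v i)^2 / (4*d^2*(rn*rn))"
        unfolding diff[OF that] by (simp add: power_divide power_mult_distrib power2_eq_square mult_ac)
      have pos: "0 < T/(2*real n)" using T_pos n_pos by simp
      have "(lam k i - mu i)^2 / mu i \<le> (lam k i - mu i)^2 / (T/(2*real n))"
        by (rule divide_left_mono[OF mu_ge[OF that]]) (simp, rule mult_pos_pos[OF mu_pos[OF that] pos])
      also have "\<dots> = T/(2*d^2) * (v i)^2"
        unfolding num rn2 using T_pos n_pos dpos by (simp add: field_simps power2_eq_square)
      finally show ?thesis .
    qed
    have "(\<Sum>i<n. (lam k i - mu i)^2 / mu i) \<le> (\<Sum>i<n. T/(2*d^2) * (v i)^2)"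
      using trm by (intro sum_mono) auto
    also have "\<dots> = T/(2*d^2) * sqnorm n v" unfolding sqnorm_def by (simp add: sum_distrib_left)
    also have "\<dots> \<le> T/(2*d^2) * (1 + \<delta>)" using rip T_pos dpos by (intro mult_left_mono) auto
    also have "\<dots> \<le> ln (real p) / 8"
    proof -
      have "T * (4*(1+\<delta>)) \<le> d^2 * ln (real p)"
        using T_le delta unfolding d_def by (simp add: le_divide_eq mult.commute)
      then show ?thesis using dpos by (simp add: field_simps)
    qed
    finally show ?thesis .
  qed
  have expbound: "exp (ln (real p) / 8) \<le> real p / 2"
  proof -
    have l2: "0 < ln (2::real)" by simp
    have "ln (4::real) = ln 2 + ln 2" using ln_mult[of 2 2] by simp
    moreover have "ln 4 \<le> ln (real p)" using p_ge by simp
    ultimately have "ln (real p) / 8 \<le> ln (real p) - ln 2" using l2 by linarith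
    also have "\<dots> = ln (real p / 2)" using ppos by (simp add: ln_div)
    finally have "exp (ln (real p) / 8) \<le> exp (ln (real p / 2))" by simp
    then show ?thesis using ppos by simp
  qed
  show ?thesis
  proof (rule INF_greatest)
    fix fhat :: "(nat \<Rightarrow> nat) \<Rightarrow> nat \<Rightarrow> real"
    show "1/8 \<le> (SUP f \<in> fclass p s D. risk n p T A fhat f)"
    proof (rule ccontr)
      assume "\<not> 1/8 \<le> (SUP f \<in> fclass p s D. risk n p T A fhat f)"
      then have lt: "(SUP f \<in> fclass p s D. risk n p T A fhat f) < 1/8" by simp
      have risk_lt: "risk n p T A fhat (e k) < 1/8" if "k < p" for k
        using SUP_upper[OF e_in[OF that], of "risk n p T A fhat"] lt by (rule le_less_trans)
      define Ak where "Ak k = {y. sqnorm p (\<lambda>j. fhat y j - e k j) < 1/2}" for k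
      define P where "P k = obs_pmf n p T A (e k)" for k
      define Q where "Q = obs_pmf n p T A f0"
      have P_eq: "P k = Pi_pmf {..<n} 0 (\<lambda>i. poisson_pmf (lam k i))" for k
        unfolding P_def obs_pmf_def lam_def ..
      have Q_eq: "Q = Pi_pmf {..<n} 0 (\<lambda>i. poisson_pmf (mu i))"
        unfolding Q_def obs_pmf_def mu_def ..
      have big: "3/4 < measure (P k) (Ak k)" if "k < p" for k
      proof -
        have "(\<integral>\<^sup>+ y. ennreal (1/2) * indicator (- Ak k) y \<partial>measure_pmf (P k))
              \<le> (\<integral>\<^sup>+ y. ennreal (sqnorm p (\<lambda>j. fhat y j - e k j)) \<partial>measure_pmf (P k))"
        proof (intro nn_integral_mono)
          fix y
          show "ennreal (1/2) * indicator (- Ak k) y \<le> ennreal (sqnorm p (\<lambda>j. fhat y j - e k j))"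
          proof (cases "y \<in> Ak k")
            case True then show ?thesis by simp
          next
            case False
            then have "1/2 \<le> sqnorm p (\<lambda>j. fhat y j - e k j)" unfolding Ak_def by simp
            then have "ennreal (1/2) \<le> ennreal (sqnorm p (\<lambda>j. fhat y j - e k j))" by (rule ennreal_leI)
            then show ?thesis using False by simp
          qed
        qed
        also have "\<dots> = risk n p T A fhat (e k)" unfolding risk_def P_def ..
        also have "\<dots> < ennreal (1/8)" using risk_lt[OF that] by (simp add: ennreal_eighth)
        finally have L: "ennreal (1/2) * emeasure (measure_pmf (P k)) (- Ak k) < ennreal (1/8)"
          by (simp add: nn_integral_cmult_indicator)
        have E: "emeasure (measure_pmf (P k)) (- Ak k) = ennreal (1 - measure (P k) (Ak k))"
        proof -
          have "measure (P k) (UNIV - Ak k) = 1 - measure (P k) (Ak k)"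
            using measure_pmf.prob_compl[where A="Ak k" and M="P k"] by simp
          then show ?thesis by (simp add: measure_pmf.emeasure_eq_measure Compl_eq_Diff_UNIV)
        qed
        have nn: "0 \<le> 1 - measure (P k) (Ak k)" using measure_pmf.prob_le_1[of "P k" "Ak k"] by simp
        have M: "ennreal (1/2 * (1 - measure (P k) (Ak k))) = ennreal (1/2) * ennreal (1 - measure (P k) (Ak k))"
          using nn by (intro ennreal_mult) auto
        have "ennreal (1/2 * (1 - measure (P k) (Ak k))) < ennreal (1/8)"
          using L unfolding E M .
        then have "1/2 * (1 - measure (P k) (Ak k)) < 1/8"
          by (simp add: ennreal_less_iff)
        then show ?thesis by simp
      qed
      have small: "measure (P k) (Ak k) \<le> real p / 2 * measure Q (Ak k) + 1/4" if "k < p" for k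
      proof -
        have "measure (P k) (Ak k) \<le> real p / 2 * measure Q (Ak k) + exp (\<Sum>i\<in>{..<n}. (lam k i - mu i)^2 / mu i) / (2 * real p)"
          unfolding P_eq Q_eq using lam_pos[OF that] mu_pos ppos
          by (intro prod_poisson_bound) auto
        moreover have "exp (\<Sum>i\<in>{..<n}. (lam k i - mu i)^2 / mu i) \<le> real p / 2"
          using chi[OF that] expbound by (meson exp_le_cancel_iff order_trans)
        then have "exp (\<Sum>i\<in>{..<n}. (lam k i - mu i)^2 / mu i) / (2 * real p) \<le> 1/4"
          using ppos by (simp add: divide_le_eq)
        ultimately show ?thesis by linarith
      qed
      have disj: "(\<Sum>k<p. measure Q (Ak k)) \<le> 1"
      proof -
        have "disjoint_family_on Ak {..<p}"
          unfolding disjoint_family_on_def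
        proof (intro ballI impI)
          fix k k' assume "k \<in> {..<p}" "k' \<in> {..<p}" "k \<noteq> k'"
          show "Ak k \<inter> Ak k' = {}"
          proof (rule ccontr)
            assume "Ak k \<inter> Ak k' \<noteq> {}"
            then obtain y where "y \<in> Ak k" "y \<in> Ak k'" by blast
            then have "sqnorm p (\<lambda>j. fhat y j - e k j) < 1/2" "sqnorm p (\<lambda>j. fhat y j - e k' j) < 1/2"
              unfolding Ak_def by auto
            moreover have "1 \<le> sqnorm p (\<lambda>j. fhat y j - e k j) + sqnorm p (\<lambda>j. fhat y j - e k' j)"
              unfolding e_def using sep_lemma \<open>k \<in> {..<p}\<close> \<open>k' \<in> {..<p}\<close> \<open>k \<noteq> k'\<close> by simp
            ultimately show False by linarith
          qed
        qed
        then have "measure Q (\<Union>k\<in>{..<p}. Ak k) = (\<Sum>k<p. measure Q (Ak k))"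
          by (intro measure_pmf.finite_measure_finite_Union) auto
        moreover have "measure Q (\<Union>k\<in>{..<p}. Ak k) \<le> 1" by (rule measure_pmf.prob_le_1)
        ultimately show ?thesis by simp
      qed
      have "(\<Sum>k<p. 3/4) < (\<Sum>k<p. measure (P k) (Ak k))"
        using ppos big by (intro sum_strict_mono) auto
      also have "\<dots> \<le> (\<Sum>k<p. real p / 2 * measure Q (Ak k) + 1/4)"
        using small by (intro sum_mono) auto
      also have "\<dots> = real p / 2 * (\<Sum>k<p. measure Q (Ak k)) + real p / 4"
        by (simp add: sum.distrib sum_distrib_left)
      also have "\<dots> \<le> real p / 2 + real p / 4"
        using disj by (simp add: mult_left_le)
      finally show False by simp
    qed
  qed
qed

end
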